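(* Suppose Assumptions 1–6 hold. Then $$R_n(\mathbf w_n^* )-R_n(\tilde{\mathbf w}_n^* )=o\{R_n(\mathbf w_n^* )\},$$ i.e. the optimal model averaging risks over $\mathcal W_n$ and over $\mathcal Q_n$ are asymptotically equivalent. No assumption on $M_n$ or on the decay of $\theta_{n,m}$ is needed.
   Context: Setting. For each sample size $n$ one observes $\mathbf y=\boldsymbol\mu+\boldsymbol\varepsilon\in\mathbb R^n$ with $\boldsymbol\mu=\mathbf X\boldsymbol\beta$, where $\mathbf X=(x_{ij})$ is a nonstochastic $n\times p_n$ matrix with $p_n<n$, $E(\boldsymbol\varepsilon)=\mathbf 0$, $\mathrm{Cov}(\boldsymbol\varepsilon)=\boldsymbol\Omega$ positive definite (all may depend on $n$). Fix integers $0=\nu_0<\nu_1<\cdots<\nu_{q_n}=p_n$. For $m=1,\dots,q_n$, $\mathbf X_m$ is the $n\times\nu_m$ matrix of the first $\nu_m$ columns of $\mathbf X$ (full column rank), $\mathbf P_m=\mathbf X_m(\mathbf X_m^\top\mathbf X_m)^{-1}\mathbf X_m^\top$, $\mathbf P_0=\mathbf 0$. Candidate models are $m\in\{1,\dots,M_n\}$, $2\le M_n\le q_n$. $R_n(m)=E\|\mathbf P_m\mathbf y-\boldsymbol\mu\|^2$; for $\mathbf w\in\mathbb R^{M_n}$, $R_n(\mathbf w)=E\|\sum_{m=1}^{M_n}w_m\mathbf P_m\mathbf y-\boldsymbol\mu\|^2$. $\mathcal W_n=\{\mathbf w\in[0,1]^{M_n}:\sum_m w_m=1\}$ and $\mathcal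 Q_n=[0,1]^{M_n}$. $\mathbf w_n^*$ minimizes $R_n(\mathbf w)$ over $\mathcal W_n$ and $\tilde{\mathbf w}_n^*$ minimizes it over $\mathcal Q_n$; $m_n^{**}$ minimizes $R_n(m)$ over $\{1,\dots,q_n\}$ (all unique). $\theta_{n,m}=\dfrac{n^{-1}\boldsymbol\mu^\top(\mathbf P_m-\mathbf P_{m-1})\boldsymbol\mu}{\mathrm{tr}\{(\mathbf P_m-\mathbf P_{m-1})\boldsymbol\Omega\}}$, $m=1,\dots,q_n$; $d_n=\max\{m:\theta_{n,m}>0\}$. Assumption 1: $\|\boldsymbol\mu\|^2/n=O(1)$. Assumption 2: constants $0<c_1\le c_2<\infty$ with $c_1<\lambda_{\min}(\boldsymbol\Omega)\le\lambda_{\max}(\boldsymbol\Omega)<c_2$. Assumption 3: for each large $n$, $\theta_{n,1}\ge\cdots\ge\theta_{n,q_n}$. Assumption 4: a constant $V\ge1$ with $\max_{1\le m\le d_n}(\nu_m-\nu_{m-1})\le V$ for all large $n$. Assumption 5: for every fixed positive integer $m$ there are $\bar\theta_m>0$, $K_m>0$ such that for all $n\ge K_m$, $m\le d_n$ and $\theta_{n,m}\ge\bar\theta_m$. Assumption 6: for each large $n$ there is $m_n'\in\{1,\dots,d_n-1\}$ with $R_n(m)<R_n(m-1)$ for $2\le m\le m_n'$, $R_n(m)\ge R_n(m-1)$ for $m_n'<m\le d_n$, and $R_n(d_n)>R_n(d_n-1)$. *)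

theory Defs
  imports "HOL-Probability.Probability" "HOL-Library.Landau_Symbols"
    "Jordan_Normal_Form.Gauss_Jordan_Elimination" "Jordan_Normal_Form.Char_Poly"
begin

definition first_cols :: "real mat \<Rightarrow> nat \<Rightarrow> real mat" where
  "first_cols X k = mat (dim_row X) k (\<lambda>(i,j). X $$ (i,j))"

definition full_col_rank :: "real mat \<Rightarrow> bool" where
  "full_col_rank A \<longleftrightarrow>
     (\<forall>v \<in> carrier_vec (dim_col A). A *\<^sub>v v = 0\<^sub>v (dim_row A) \<longrightarrow> v = 0\<^sub>v (dim_col A))"

definition hat_mat :: "real mat \<Rightarrow> real mat" where
  "hat_mat A = A * the (mat_inverse (transpose_mat A * A)) * transpose_mat A"

text \<open>P_m (with P_0 = 0) for design X and column cut points nu.\<close>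
definition proj :: "real mat \<Rightarrow> (nat \<Rightarrow> nat) \<Rightarrow> nat \<Rightarrow> real mat" where
  "proj X nu m = (if m = 0 then 0\<^sub>m (dim_row X) (dim_row X)
                 else hat_mat (first_cols X (nu m)))"

definition sqnorm :: "real vec \<Rightarrow> real" where
  "sqnorm v = (\<Sum>i<dim_vec v. (v $ i)\<^sup>2)"

definition mtrace :: "real mat \<Rightarrow> real" where
  "mtrace A = (\<Sum>i<dim_row A. A $$ (i,i))"

definition risk_mat :: "'a measure \<Rightarrow> ('a \<Rightarrow> real vec) \<Rightarrow> real vec \<Rightarrow> real mat \<Rightarrow> real" where
  "risk_mat M eps mu A = integral\<^sup>L M (\<lambda>\<omega>. sqnorm (A *\<^sub>v (mu + eps \<omega>) - mu))"

definition avg_mat :: "real mat \<Rightarrow> (nat \<Rightarrow> nat) \<Rightarrow> nat \<Rightarrow> (nat \<Rightarrow> real) \<Rightarrow> real mat" where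
  "avg_mat X nu Mn w = mat (dim_row X) (dim_row X)
      (\<lambda>(i,j). \<Sum>m=1..Mn. w m * proj X nu m $$ (i,j))"

definition risk_w :: "'a measure \<Rightarrow> ('a \<Rightarrow> real vec) \<Rightarrow> real mat \<Rightarrow> real vec \<Rightarrow> (nat \<Rightarrow> nat)
     \<Rightarrow> nat \<Rightarrow> (nat \<Rightarrow> real) \<Rightarrow> real" where
  "risk_w M eps X beta nu Mn w = risk_mat M eps (X *\<^sub>v beta) (avg_mat X nu Mn w)"

definition risk_m :: "'a measure \<Rightarrow> ('a \<Rightarrow> real vec) \<Rightarrow> real mat \<Rightarrow> real vec \<Rightarrow> (nat \<Rightarrow> nat)
     \<Rightarrow> nat \<Rightarrow> real" where
  "risk_m M eps X beta nu m = risk_mat M eps (X *\<^sub>v beta) (proj X nu m)"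

definition theta :: "real mat \<Rightarrow> real vec \<Rightarrow> real mat \<Rightarrow> (nat \<Rightarrow> nat) \<Rightarrow> nat \<Rightarrow> real" where
  "theta X beta Om nu m =
     (let mu = X *\<^sub>v beta; D = proj X nu m - proj X nu (m - 1) in
      (scalar_prod mu (D *\<^sub>v mu) / real (dim_row X)) / mtrace (D * Om))"

definition dn :: "real mat \<Rightarrow> real vec \<Rightarrow> real mat \<Rightarrow> (nat \<Rightarrow> nat) \<Rightarrow> nat \<Rightarrow> nat" where
  "dn X beta Om nu q = Max {m \<in> {1..q}. theta X beta Om nu m > 0}"

definition simplex_w :: "nat \<Rightarrow> (nat \<Rightarrow> real) set" where
  "simplex_w Mn = {w. (\<forall>m\<in>{1..Mn}. 0 \<le> w m \<and> w m \<le> 1) \<and> (\<Sum>m=1..Mn. w m) = 1}"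

definition cube_w :: "nat \<Rightarrow> (nat \<Rightarrow> real) set" where
  "cube_w Mn = {w. \<forall>m\<in>{1..Mn}. 0 \<le> w m \<and> w m \<le> 1}"

definition unique_argmin :: "nat \<Rightarrow> ((nat \<Rightarrow> real) \<Rightarrow> real) \<Rightarrow> (nat \<Rightarrow> real) set \<Rightarrow> (nat \<Rightarrow> real) \<Rightarrow> bool" where
  "unique_argmin Mn f S w \<longleftrightarrow> w \<in> S \<and> (\<forall>v\<in>S. f w \<le> f v)
      \<and> (\<forall>v\<in>S. f v = f w \<longrightarrow> (\<forall>m\<in>{1..Mn}. v m = w m))"

end

theory Submission
  imports Defs
begin



lemma prob_lin:
  fixes M :: "'a measure" and e :: "'a \<Rightarrow> nat \<Rightarrow> real"
  assumes P: "prob_space M"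
    and meas: "\<And>j. j<n \<Longrightarrow> (\<lambda>\<omega>. e \<omega> j) \<in> borel_measurable M"
    and sq: "\<And>j. j<n \<Longrightarrow> integrable M (\<lambda>\<omega>. (e \<omega> j)\<^sup>2)"
    and m0: "\<And>j. j<n \<Longrightarrow> integral\<^sup>L M (\<lambda>\<omega>. e \<omega> j) = 0"
    and cov: "\<And>i j. i<n \<Longrightarrow> j<n \<Longrightarrow> integral\<^sup>L M (\<lambda>\<omega>. e \<omega> i * e \<omega> j) = Om i j"
  shows "integrable M (\<lambda>\<omega>. \<Sum>j<n. c j * e \<omega> j)"
    and "integral\<^sup>L M (\<lambda>\<omega>. \<Sum>j<n. c j * e \<omega> j) = 0"
    and "integrable M (\<lambda>\<omega>. (\<Sum>j<n. c j * e \<omega> j)\<^sup>2)"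
    and "integral\<^sup>L M (\<lambda>\<omega>. (\<Sum>j<n. c j * e \<omega> j)\<^sup>2) = (\<Sum>j<n. \<Sum>l<n. c j * c l * Om j l)"
proof -
  interpret prob_space M by fact
  have ie: "integrable M (\<lambda>\<omega>. e \<omega> j)" if "j<n" for j
    by (rule square_integrable_imp_integrable[OF meas[OF that] sq[OF that]])
  have iee: "integrable M (\<lambda>\<omega>. e \<omega> j * e \<omega> l)" if "j<n" "l<n" for j l
  proof (rule Bochner_Integration.integrable_bound[where f="\<lambda>\<omega>. (e \<omega> j)\<^sup>2 + (e \<omega> l)\<^sup>2"])
    show "integrable M (\<lambda>\<omega>. (e \<omega> j)\<^sup>2 + (e \<omega> l)\<^sup>2)" using sq that by auto
    show "(\<lambda>\<omega>. e \<omega> j * e \<omega> l) \<in> borel_measurable M" using meas that by auto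
    show "AE x in M. norm (e x j * e x l) \<le> norm ((e x j)\<^sup>2 + (e x l)\<^sup>2)"
    proof (rule AE_I2)
      fix x
      have h: "0 \<le> (\<bar>e x j\<bar> - \<bar>e x l\<bar>)\<^sup>2" by simp
      have "\<bar>e x j * e x l\<bar> \<le> (e x j)\<^sup>2 + (e x l)\<^sup>2"
      proof -
        have "2 * \<bar>e x j\<bar> * \<bar>e x l\<bar> \<le> (e x j)\<^sup>2 + (e x l)\<^sup>2"
          using h unfolding power2_diff power2_abs by simp
        moreover have "0 \<le> \<bar>e x j\<bar> * \<bar>e x l\<bar>" by simp
        ultimately show ?thesis unfolding abs_mult by linarith
      qed
      thus "norm (e x j * e x l) \<le> norm ((e x j)\<^sup>2 + (e x l)\<^sup>2)" by simp
    qed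
  qed
  show "integrable M (\<lambda>\<omega>. \<Sum>j<n. c j * e \<omega> j)" using ie by auto
  show "integral\<^sup>L M (\<lambda>\<omega>. \<Sum>j<n. c j * e \<omega> j) = 0"
    using ie m0 by (simp add: integral_sum)
  have eq: "(\<Sum>j<n. c j * e \<omega> j)\<^sup>2 = (\<Sum>j<n. \<Sum>l<n. c j * c l * (e \<omega> j * e \<omega> l))" for \<omega>
    by (simp add: power2_eq_square sum_product algebra_simps)
  show "integrable M (\<lambda>\<omega>. (\<Sum>j<n. c j * e \<omega> j)\<^sup>2)"
    unfolding eq apply (intro Bochner_Integration.integrable_sum integrable_mult_right) 
      apply (rule iee) apply simp_all done
  show "integral\<^sup>L M (\<lambda>\<omega>. (\<Sum>j<n. c j * e \<omega> j)\<^sup>2) = (\<Sum>j<n. \<Sum>l<n. c j * c l * Om j l)"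
  proof -
    have "integral\<^sup>L M (\<lambda>\<omega>. \<Sum>j<n. \<Sum>l<n. c j * c l * (e \<omega> j * e \<omega> l))
       = (\<Sum>j<n. integral\<^sup>L M (\<lambda>\<omega>. \<Sum>l<n. c j * c l * (e \<omega> j * e \<omega> l)))"
      by (rule Bochner_Integration.integral_sum, intro Bochner_Integration.integrable_sum integrable_mult_right; rule iee; simp)
    also have "\<dots> = (\<Sum>j<n. \<Sum>l<n. integral\<^sup>L M (\<lambda>\<omega>. c j * c l * (e \<omega> j * e \<omega> l)))"
      by (intro sum.cong refl Bochner_Integration.integral_sum, intro integrable_mult_right; rule iee; simp)
    also have "\<dots> = (\<Sum>j<n. \<Sum>l<n. c j * c l * Om j l)"
      by (intro sum.cong refl) (simp add: cov)
    finally show ?thesis by (simp only: eq)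
  qed
qed




lemma hat_props:
  fixes A :: "real mat"
  assumes A: "A \<in> carrier_mat n k" and r: "full_col_rank A"
  shows "hat_mat A \<in> carrier_mat n n" "hat_mat A * A = A" "transpose_mat (hat_mat A) = hat_mat A"
    "\<exists>B. B \<in> carrier_mat k k \<and> hat_mat A = A * B * transpose_mat A"
proof -
  define G where "G = transpose_mat A * A"
  have G: "G \<in> carrier_mat k k" using A unfolding G_def by auto
  have ker: "v = 0\<^sub>v k" if v: "v \<in> carrier_vec k" and Gv: "G *\<^sub>v v = 0\<^sub>v k" for v
  proof -
    have Av: "A *\<^sub>v v \<in> carrier_vec n" using A v by auto
    have "(A *\<^sub>v v) \<bullet> (A *\<^sub>v v) = (transpose_mat A *\<^sub>v (A *\<^sub>v v)) \<bullet> v"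
      using transpose_vec_mult_scalar[OF A v Av] by simp
    also have "\<dots> = (G *\<^sub>v v) \<bullet> v" unfolding G_def using A v by simp
    also have "\<dots> = 0" using Gv v by simp
    finally have "(A *\<^sub>v v) \<bullet>c (A *\<^sub>v v) = 0" by simp
    hence "A *\<^sub>v v = 0\<^sub>v n" using conjugate_square_eq_0_vec[OF Av] by simp
    thus ?thesis using r A v unfolding full_col_rank_def by auto
  qed
  have "det G \<noteq> 0"
    using det_0_iff_vec_prod_zero_field[OF G] ker by auto
  hence U: "G \<in> Units (ring_mat TYPE(real) k ())" by (rule det_non_zero_imp_unit[OF G])
  obtain B where mi: "mat_inverse G = Some B"
    using mat_inverse(1)[OF G, of "()"] U by (cases "mat_inverse G") auto
  from mat_inverse(2)[OF G mi] have GB: "G * B = 1\<^sub>m k" and BG: "B * G = 1\<^sub>m k"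
    and B: "B \<in> carrier_mat k k" by auto
  have H: "hat_mat A = A * B * transpose_mat A" unfolding hat_mat_def G_def[symmetric] mi by simp
  show "\<exists>B. B \<in> carrier_mat k k \<and> hat_mat A = A * B * transpose_mat A" using H B by auto
  show C: "hat_mat A \<in> carrier_mat n n" unfolding H using A B by auto
  have "hat_mat A * A = A * B * G" unfolding H G_def
    using assoc_mult_mat[of "A * B" n k "transpose_mat A" n A k] A B by simp
  also have "\<dots> = A" using A B G BG by (simp add: assoc_mult_mat[of _ n k _ k _ k])
  finally show "hat_mat A * A = A" .
  have GT: "transpose_mat G = G" unfolding G_def using A by (simp add: transpose_mult[of _ k n _ k])
  have BT: "transpose_mat B = B"
  proof -
    have "transpose_mat B * G = 1\<^sub>m k"
      using transpose_mult[OF G B] GB GT by simp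
    hence "transpose_mat B * G * B = B" using B by simp
    thus ?thesis using GB B G by (simp add: assoc_mult_mat[of _ k k _ k _ k])
  qed
  have AB: "A * B \<in> carrier_mat n k" using A B by auto
  have "transpose_mat (hat_mat A) = transpose_mat (transpose_mat A) * transpose_mat (A * B)"
    unfolding H by (rule transpose_mult[OF AB], use A in auto)
  also have "transpose_mat (A * B) = transpose_mat B * transpose_mat A"
    by (rule transpose_mult[OF A B])
  also have "transpose_mat (transpose_mat A) * (transpose_mat B * transpose_mat A) = A * B * transpose_mat A"
    using A B BT by (simp add: assoc_mult_mat[of A n k B k "transpose_mat A" n])
  finally show "transpose_mat (hat_mat A) = hat_mat A" unfolding H .
qed




lemma cross_zero:
  fixes d1 d2 c :: "nat \<Rightarrow> nat \<Rightarrow> real" and x y :: "nat \<Rightarrow> real"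
  assumes sym: "\<And>i j. i<n \<Longrightarrow> j<n \<Longrightarrow> d1 i j = d1 j i"
    and orth: "\<And>i m. i<n \<Longrightarrow> m<n \<Longrightarrow> (\<Sum>l<n. d1 i l * d2 l m) = c i m"
  shows "(\<Sum>i<n. (\<Sum>j<n. d1 i j * x j) * (\<Sum>l<n. d2 i l * y l))
       = (\<Sum>j<n. \<Sum>l<n. x j * y l * c j l)"
proof -
  have "(\<Sum>i<n. (\<Sum>j<n. d1 i j * x j) * (\<Sum>l<n. d2 i l * y l))
      = (\<Sum>i<n. \<Sum>j<n. \<Sum>l<n. x j * y l * (d1 i j * d2 i l))"
    unfolding sum_product by (intro sum.cong refl) (simp only: mult_ac)
  also have "\<dots> = (\<Sum>j<n. \<Sum>i<n. \<Sum>l<n. x j * y l * (d1 i j * d2 i l))"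
    by (rule sum.swap)
  also have "\<dots> = (\<Sum>j<n. \<Sum>l<n. \<Sum>i<n. x j * y l * (d1 i j * d2 i l))"
    by (intro sum.cong refl sum.swap)
  also have "\<dots> = (\<Sum>j<n. \<Sum>l<n. x j * y l * (\<Sum>i<n. d1 j i * d2 i l))"
    by (intro sum.cong refl) (simp add: sum_distrib_left sym)
  also have "\<dots> = (\<Sum>j<n. \<Sum>l<n. x j * y l * c j l)"
    by (intro sum.cong refl) (simp add: orth)
  finally show ?thesis .
qed

lemma orth_sum:
  fixes dd :: "nat \<Rightarrow> nat \<Rightarrow> nat \<Rightarrow> real"
  assumes fin: "finite K"
    and sym: "\<And>k i j. k \<in> K \<Longrightarrow> i<n \<Longrightarrow> j<n \<Longrightarrow> dd k i j = dd k j i"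
    and orth: "\<And>j k i m. j\<in>K \<Longrightarrow> k\<in>K \<Longrightarrow> j\<noteq>k \<Longrightarrow> i<n \<Longrightarrow> m<n \<Longrightarrow> (\<Sum>l<n. dd j i l * dd k l m) = 0"
  shows "(\<Sum>i<n. (\<Sum>k\<in>K. \<Sum>j<n. dd k i j * z k j)\<^sup>2) = (\<Sum>k\<in>K. \<Sum>i<n. (\<Sum>j<n. dd k i j * z k j)\<^sup>2)"
proof -
  define r where "r k i = (\<Sum>j<n. dd k i j * z k j)" for k i
  have cz: "(\<Sum>i<n. r k i * r k' i) = 0" if "k \<in> K" "k' \<in> K" "k \<noteq> k'" for k k'
    unfolding r_def
    by (subst cross_zero[where c="\<lambda>_ _. 0"]) (use sym orth that in auto)
  have "(\<Sum>i<n. (\<Sum>k\<in>K. r k i)\<^sup>2) = (\<Sum>i<n. \<Sum>k\<in>K. \<Sum>k'\<in>K. r k i * r k' i)"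
    by (simp add: power2_eq_square sum_product)
  also have "\<dots> = (\<Sum>k\<in>K. \<Sum>k'\<in>K. \<Sum>i<n. r k i * r k' i)"
    by (subst sum.swap, intro sum.cong refl sum.swap)
  also have "\<dots> = (\<Sum>k\<in>K. \<Sum>i<n. r k i * r k i)"
  proof (rule sum.cong[OF refl])
    fix k assume k: "k \<in> K"
    have "(\<Sum>k'\<in>K. \<Sum>i<n. r k i * r k' i) = (\<Sum>k'\<in>K. if k' = k then (\<Sum>i<n. r k i * r k i) else 0)"
      by (intro sum.cong refl) (use cz k in auto)
    also have "\<dots> = (\<Sum>i<n. r k i * r k i)" using k fin by (simp add: sum.delta)
    finally show "(\<Sum>k'\<in>K. \<Sum>i<n. r k i * r k' i) = (\<Sum>i<n. r k i * r k i)" .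
  qed
  finally show ?thesis unfolding r_def by (simp add: power2_eq_square)
qed




lemma telesc:
  fixes a :: "nat \<Rightarrow> real"
  shows "(\<Sum>k=1..q. a k - a (k-1)) = a q - a 0"
  by (induction q) (auto simp: sum.atLeast1_atMost_eq)

lemma abel:
  fixes w a :: "nat \<Rightarrow> real"
  assumes "a 0 = 0"
  shows "(\<Sum>m=1..M. w m * a m) = (\<Sum>k=1..M. (\<Sum>m=k..M. w m) * (a k - a (k-1)))"
proof (induction M)
  case 0 thus ?case by simp
next
  case (Suc M)
  have "(\<Sum>k=1..Suc M. (\<Sum>m=k..Suc M. w m) * (a k - a (k-1)))
     = (\<Sum>k=1..Suc M. (\<Sum>m=k..M. w m) * (a k - a (k-1)) + w (Suc M) * (a k - a (k-1)))"
    by (intro sum.cong refl) (auto simp: algebra_simps)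
  also have "\<dots> = (\<Sum>k=1..Suc M. (\<Sum>m=k..M. w m) * (a k - a (k-1))) + w (Suc M) * (\<Sum>k=1..Suc M. (a k - a (k-1)))"
    by (simp only: sum.distrib sum_distrib_left)
  also have "(\<Sum>k=1..Suc M. (a k - a (k-1))) = a (Suc M)" using telesc[of a "Suc M"] assms by simp
  also have "(\<Sum>k=1..Suc M. (\<Sum>m=k..M. w m) * (a k - a (k-1))) = (\<Sum>k=1..M. (\<Sum>m=k..M. w m) * (a k - a (k-1)))"
    by simp
  finally show ?case using Suc by simp
qed

lemma abel_q:
  fixes w a :: "nat \<Rightarrow> real"
  assumes "a 0 = 0" "M \<le> q"
  shows "(\<Sum>m=1..M. w m * a m) = (\<Sum>k=1..q. (\<Sum>m=k..M. w m) * (a k - a (k-1)))"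
proof -
  have "(\<Sum>k=1..q. (\<Sum>m=k..M. w m) * (a k - a (k-1))) = (\<Sum>k=1..M. (\<Sum>m=k..M. w m) * (a k - a (k-1)))"
    by (rule sum.mono_neutral_right) (use assms in auto)
  thus ?thesis using abel[of a w M, OF assms(1)] by simp
qed




lemma dd_orth:
  fixes pp :: "nat \<Rightarrow> nat \<Rightarrow> nat \<Rightarrow> real"
  assumes prod: "\<And>j k i m. j \<le> q \<Longrightarrow> k \<le> q \<Longrightarrow> i < n \<Longrightarrow> m < n \<Longrightarrow>
        (\<Sum>l<n. pp j i l * pp k l m) = pp (min j k) i m"
    and j: "j \<in> {1..q}" and k: "k \<in> {1..q}" and i: "i < n" and m: "m < n"
  shows "(\<Sum>l<n. (pp j i l - pp (j-1) i l) * (pp k l m - pp (k-1) l m))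
       = (if j = k then pp k i m - pp (k-1) i m else 0)"
proof -
  have "(\<Sum>l<n. (pp j i l - pp (j-1) i l) * (pp k l m - pp (k-1) l m))
     = (\<Sum>l<n. pp j i l * pp k l m) - (\<Sum>l<n. pp j i l * pp (k-1) l m)
       - (\<Sum>l<n. pp (j-1) i l * pp k l m) + (\<Sum>l<n. pp (j-1) i l * pp (k-1) l m)"
    by (simp add: algebra_simps sum_subtractf sum.distrib)
  also have "\<dots> = pp (min j k) i m - pp (min j (k-1)) i m - pp (min (j-1) k) i m + pp (min (j-1) (k-1)) i m"
  proof -
    have "j - 1 \<le> q" "k - 1 \<le> q" "j \<le> q" "k \<le> q" using j k by auto
    thus ?thesis using i m prod[of j k i m] prod[of j "k-1" i m] prod[of "j-1" k i m] prod[of "j-1" "k-1" i m]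
      by simp
  qed
  also have "\<dots> = (if j = k then pp k i m - pp (k-1) i m else 0)"
  proof (cases "j = k")
    case True thus ?thesis by simp
  next
    case False
    hence "j < k \<or> k < j" by auto
    thus ?thesis
    proof
      assume "j < k"
      hence "min j k = j" "min j (k-1) = j" "min (j-1) k = j-1" "min (j-1) (k-1) = j-1" by auto
      thus ?thesis using False by simp
    next
      assume "k < j"
      hence "min j k = k" "min j (k-1) = k-1" "min (j-1) k = k" "min (j-1) (k-1) = k-1" by auto
      thus ?thesis using False by simp
    qed
  qed
  finally show ?thesis .
qed


lemma pointwise:
  fixes pp :: "nat \<Rightarrow> nat \<Rightarrow> nat \<Rightarrow> real" and w mu y :: "nat \<Rightarrow> real"
  assumes pp0: "\<And>i j. pp 0 i j = 0"
    and sym: "\<And>k i j. k \<le> q \<Longrightarrow> i<n \<Longrightarrow> j<n \<Longrightarrow> pp k i j = pp k j i"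
    and prod: "\<And>j k i m. j \<le> q \<Longrightarrow> k \<le> q \<Longrightarrow> i < n \<Longrightarrow> m < n \<Longrightarrow>
        (\<Sum>l<n. pp j i l * pp k l m) = pp (min j k) i m"
    and muq: "\<And>i. i<n \<Longrightarrow> (\<Sum>l<n. pp q i l * mu l) = mu i"
    and Mq: "M \<le> q"
  shows "(\<Sum>i<n. ((\<Sum>j<n. (\<Sum>m=1..M. w m * pp m i j) * y j) - mu i)\<^sup>2)
    = (\<Sum>k=1..q. \<Sum>i<n. (\<Sum>j<n. (pp k i j - pp (k-1) i j) * ((\<Sum>m=k..M. w m) * y j - mu j))\<^sup>2)"
proof -
  define dd where "dd k i j = pp k i j - pp (k-1) i j" for k i j
  define W where "W k = (\<Sum>m=k..M. w m)" for k
  have step1: "(\<Sum>j<n. (\<Sum>m=1..M. w m * pp m i j) * y j) - mu i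
      = (\<Sum>k=1..q. \<Sum>j<n. dd k i j * (W k * y j - mu j))" if i: "i < n" for i
  proof -
    have a: "(\<Sum>m=1..M. w m * pp m i j) = (\<Sum>k=1..q. W k * dd k i j)" for j
      unfolding W_def dd_def by (rule abel_q) (use pp0 Mq in auto)
    have b: "pp q i l = (\<Sum>k=1..q. dd k i l)" for l
      unfolding dd_def using telesc[of "\<lambda>k. pp k i l" q] pp0 by simp
    have "mu i = (\<Sum>l<n. (\<Sum>k=1..q. dd k i l) * mu l)" using muq[OF i] b by simp
    hence "(\<Sum>j<n. (\<Sum>m=1..M. w m * pp m i j) * y j) - mu i
        = (\<Sum>j<n. (\<Sum>k=1..q. W k * dd k i j) * y j) - (\<Sum>l<n. (\<Sum>k=1..q. dd k i l) * mu l)"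
      using a by simp
    also have "\<dots> = (\<Sum>j<n. \<Sum>k=1..q. dd k i j * (W k * y j - mu j))"
      by (simp add: sum_subtractf[symmetric] sum_distrib_right sum_distrib_left algebra_simps)
    also have "\<dots> = (\<Sum>k=1..q. \<Sum>j<n. dd k i j * (W k * y j - mu j))"
      by (rule sum.swap)
    finally show ?thesis .
  qed
  have "(\<Sum>i<n. ((\<Sum>j<n. (\<Sum>m=1..M. w m * pp m i j) * y j) - mu i)\<^sup>2)
      = (\<Sum>i<n. (\<Sum>k\<in>{1..q}. \<Sum>j<n. dd k i j * (W k * y j - mu j))\<^sup>2)"
    using step1 by simp
  also have "\<dots> = (\<Sum>k\<in>{1..q}. \<Sum>i<n. (\<Sum>j<n. dd k i j * (W k * y j - mu j))\<^sup>2)"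
  proof (rule orth_sum)
    show "finite {1..q}" by simp
    show "dd k i j = dd k j i" if "k \<in> {1..q}" "i < n" "j < n" for k i j
      unfolding dd_def using sym[of k i j] sym[of "k-1" i j] that by auto
    show "(\<Sum>l<n. dd j i l * dd k l m) = 0" if "j \<in> {1..q}" "k \<in> {1..q}" "j \<noteq> k" "i < n" "m < n" for j k i m
      unfolding dd_def using dd_orth[of q n pp j k i m] prod that by simp
  qed
  finally show ?thesis unfolding dd_def W_def .
qed

lemma first_cols_carrier: "X \<in> carrier_mat n p \<Longrightarrow> first_cols X k \<in> carrier_mat n k"
  unfolding first_cols_def by auto

lemma first_cols_full: "X \<in> carrier_mat n p \<Longrightarrow> first_cols X p = X"
  unfolding first_cols_def by (auto intro!: eq_matI)

lemma hat_mult_sub: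
  fixes X :: "real mat"
  assumes X: "X \<in> carrier_mat n p" and jk: "j \<le> k"
    and HX: "H * first_cols X k = first_cols X k" and H: "H \<in> carrier_mat n n"
  shows "H * first_cols X j = first_cols X j"
proof (rule eq_matI)
  fix i l assume i: "i < dim_row (first_cols X j)" and l: "l < dim_col (first_cols X j)"
  have l': "l < k" using l jk first_cols_carrier[OF X, of j] by auto
  have cj: "col (first_cols X j) l = col (first_cols X k) l"
    using l l' X unfolding first_cols_def by (auto intro!: eq_vecI)
  have "(H * first_cols X j) $$ (i,l) = scalar_prod (row H i) (col (first_cols X j) l)"
    using i l H X first_cols_carrier[OF X, of j] by simp
  also have "\<dots> = (H * first_cols X k) $$ (i,l)"
    unfolding cj using i l' H X first_cols_carrier[OF X, of j] first_cols_carrier[OF X, of k] by simp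
  also have "\<dots> = first_cols X j $$ (i,l)" unfolding HX
    using i l l' X unfolding first_cols_def by auto
  finally show "(H * first_cols X j) $$ (i, l) = first_cols X j $$ (i, l)" .
qed (use H X first_cols_carrier[OF X, of j] in auto)




lemma nu_mono:
  assumes mono: "\<forall>m<q. nu m < (nu (Suc m) :: nat)" and jk: "j \<le> k" and kq: "k \<le> q"
  shows "nu j \<le> nu k"
  using jk kq
proof (induction k)
  case 0 thus ?case by simp
next
  case (Suc k)
  show ?case
  proof (cases "j = Suc k")
    case True thus ?thesis by simp
  next
    case False
    hence "nu j \<le> nu k" using Suc by auto
    also have "nu k < nu (Suc k)" using mono Suc by auto
    finally show ?thesis by simp
  qed
qed

lemma proj_facts:
  fixes X :: "real mat"
  assumes X: "X \<in> carrier_mat n p" and nu0: "nu 0 = 0"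
    and mono: "\<forall>m<q. nu m < nu (Suc m)" and nuq: "nu q = p"
    and rank: "\<forall>m\<in>{1..q}. full_col_rank (first_cols X (nu m))"
  shows "\<And>k. k \<le> q \<Longrightarrow> proj X nu k \<in> carrier_mat n n"
    and "\<And>k. k \<le> q \<Longrightarrow> transpose_mat (proj X nu k) = proj X nu k"
    and "\<And>j k. j \<le> q \<Longrightarrow> k \<le> q \<Longrightarrow> proj X nu j * proj X nu k = proj X nu (min j k)"
    and "proj X nu q * X = X"
proof -
  have dr: "dim_row X = n" using X by auto
  have fc: "first_cols X m \<in> carrier_mat n m" for m using first_cols_carrier[OF X] .
  have hp: "hat_mat (first_cols X (nu k)) \<in> carrier_mat n n"
    "hat_mat (first_cols X (nu k)) * first_cols X (nu k) = first_cols X (nu k)"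
    "transpose_mat (hat_mat (first_cols X (nu k))) = hat_mat (first_cols X (nu k))"
    "\<exists>B. B \<in> carrier_mat (nu k) (nu k) \<and> hat_mat (first_cols X (nu k)) =
        first_cols X (nu k) * B * transpose_mat (first_cols X (nu k))"
    if "k \<in> {1..q}" for k
    using hat_props[OF fc rank[rule_format, OF that]] by auto
  show C: "proj X nu k \<in> carrier_mat n n" if "k \<le> q" for k
    using hp(1)[of k] that unfolding proj_def dr by auto
  show S: "transpose_mat (proj X nu k) = proj X nu k" if "k \<le> q" for k
    using hp(3)[of k] that unfolding proj_def dr by auto
  have le: "proj X nu k * proj X nu j = proj X nu j" if jk: "j \<le> k" "k \<le> q" "1 \<le> j" for j k
  proof -
    have k1: "k \<in> {1..q}" "j \<in> {1..q}" using jk by auto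
    have "nu j \<le> nu k" using nu_mono[OF mono jk(1,2)] .
    hence HX: "hat_mat (first_cols X (nu k)) * first_cols X (nu j) = first_cols X (nu j)"
      using hat_mult_sub[OF X _ hp(2)[OF k1(1)] hp(1)[OF k1(1)]] by blast
    obtain B where B: "B \<in> carrier_mat (nu j) (nu j)"
      and Hj: "hat_mat (first_cols X (nu j)) = first_cols X (nu j) * B * transpose_mat (first_cols X (nu j))"
      using hp(4)[OF k1(2)] by blast
    let ?H = "hat_mat (first_cols X (nu k))" and ?A = "first_cols X (nu j)"
    have "?H * (?A * B * transpose_mat ?A) = (?H * ?A) * B * transpose_mat ?A"
    proof -
      have H: "?H \<in> carrier_mat n n" using hp(1)[OF k1(1)] .
      have A: "?A \<in> carrier_mat n (nu j)" using fc .
      have T: "transpose_mat ?A \<in> carrier_mat (nu j) n" using A by simp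
      have e1: "?A * B * transpose_mat ?A = ?A * (B * transpose_mat ?A)"
        using assoc_mult_mat[OF A B T] .
      have e2: "(?H * ?A) * B * transpose_mat ?A = (?H * ?A) * (B * transpose_mat ?A)"
        using assoc_mult_mat[OF mult_carrier_mat[OF H A] B T] .
      have e3: "(?H * ?A) * (B * transpose_mat ?A) = ?H * (?A * (B * transpose_mat ?A))"
        using assoc_mult_mat[OF H A mult_carrier_mat[OF B T]] .
      show ?thesis unfolding e1 e2 e3 ..
    qed
    also have "\<dots> = ?A * B * transpose_mat ?A" unfolding HX ..
    finally show ?thesis unfolding proj_def using jk Hj by auto
  qed
  show "proj X nu j * proj X nu k = proj X nu (min j k)" if "j \<le> q" "k \<le> q" for j k
  proof (cases "j = 0 \<or> k = 0")
    case True
    thus ?thesis using C[OF that(1)] C[OF that(2)] unfolding proj_def dr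
      by (elim disjE) auto
  next
    case False
    show ?thesis
    proof (cases "j \<le> k")
      case True
      have "proj X nu j * proj X nu k = transpose_mat (proj X nu j) * transpose_mat (proj X nu k)"
        using S that by simp
      also have "\<dots> = transpose_mat (proj X nu k * proj X nu j)"
        using transpose_mult[OF C[OF that(2)] C[OF that(1)]] by simp
      also have "\<dots> = proj X nu j" using le[of j k] True False that S by simp
      finally show ?thesis using True by simp
    next
      case F2: False
      thus ?thesis using le[of k j] False that by simp
    qed
  qed
  have q1: "1 \<le> q \<Longrightarrow> proj X nu q * X = X"
    using hp(2)[of q] unfolding proj_def first_cols_full[OF X, folded nuq] using nuq first_cols_full[OF X]
    by auto
  show "proj X nu q * X = X"
  proof (cases "q = 0")
    case True
    hence "p = 0" using nuq nu0 by simp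
    thus ?thesis using X True unfolding proj_def by (auto intro!: eq_matI)
  next
    case False thus ?thesis using q1 by simp
  qed
qed


definition ppf :: "real mat \<Rightarrow> (nat \<Rightarrow> nat) \<Rightarrow> nat \<Rightarrow> nat \<Rightarrow> nat \<Rightarrow> nat \<Rightarrow> real" where
  "ppf X nu n k i j = (if i < n \<and> j < n then proj X nu k $$ (i,j) else 0)"

definition ddf :: "real mat \<Rightarrow> (nat \<Rightarrow> nat) \<Rightarrow> nat \<Rightarrow> nat \<Rightarrow> nat \<Rightarrow> nat \<Rightarrow> real" where
  "ddf X nu n k i j = ppf X nu n k i j - ppf X nu n (k-1) i j"

lemma ppf_facts:
  fixes X :: "real mat"
  assumes X: "X \<in> carrier_mat n p" and nu0: "nu 0 = 0"
    and mono: "\<forall>m<q. nu m < nu (Suc m)" and nuq: "nu q = p"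
    and rank: "\<forall>m\<in>{1..q}. full_col_rank (first_cols X (nu m))"
    and beta: "beta \<in> carrier_vec p"
  shows "\<And>i j. ppf X nu n 0 i j = 0"
    and "\<And>k i j. k \<le> q \<Longrightarrow> i<n \<Longrightarrow> j<n \<Longrightarrow> ppf X nu n k i j = ppf X nu n k j i"
    and "\<And>j k i m. j \<le> q \<Longrightarrow> k \<le> q \<Longrightarrow> i < n \<Longrightarrow> m < n \<Longrightarrow>
        (\<Sum>l<n. ppf X nu n j i l * ppf X nu n k l m) = ppf X nu n (min j k) i m"
    and "\<And>i. i<n \<Longrightarrow> (\<Sum>l<n. ppf X nu n q i l * (X *\<^sub>v beta) $ l) = (X *\<^sub>v beta) $ i"
proof -
  note pf = proj_facts[OF X nu0 mono nuq rank]
  have dr: "dim_row X = n" using X by auto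
  show "ppf X nu n 0 i j = 0" for i j unfolding ppf_def proj_def dr by auto
  show "ppf X nu n k i j = ppf X nu n k j i" if "k \<le> q" "i<n" "j<n" for k i j
  proof -
    have "transpose_mat (proj X nu k) $$ (j,i) = proj X nu k $$ (i,j)"
      using pf(1)[OF that(1)] that by auto
    thus ?thesis unfolding ppf_def using pf(2)[OF that(1)] that by auto
  qed
  show "(\<Sum>l<n. ppf X nu n j i l * ppf X nu n k l m) = ppf X nu n (min j k) i m"
    if "j \<le> q" "k \<le> q" "i < n" "m < n" for j k i m
  proof -
    have "(proj X nu j * proj X nu k) $$ (i,m) = (\<Sum>l<n. proj X nu j $$ (i,l) * proj X nu k $$ (l,m))"
      using pf(1)[OF that(1)] pf(1)[OF that(2)] that
      by (simp add: scalar_prod_def atLeast0LessThan)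
    thus ?thesis unfolding ppf_def using pf(3)[OF that(1,2)] that by simp
  qed
  show "(\<Sum>l<n. ppf X nu n q i l * (X *\<^sub>v beta) $ l) = (X *\<^sub>v beta) $ i" if "i<n" for i
  proof -
    have Xb: "X *\<^sub>v beta \<in> carrier_vec n" using X beta by auto
    have "proj X nu q *\<^sub>v (X *\<^sub>v beta) = (proj X nu q * X) *\<^sub>v beta"
      using pf(1)[of q] X beta by simp
    hence "(proj X nu q *\<^sub>v (X *\<^sub>v beta)) $ i = (X *\<^sub>v beta) $ i" using pf(4) by simp
    moreover have "(proj X nu q *\<^sub>v v) $ i = (\<Sum>l<n. proj X nu q $$ (i,l) * v $ l)"
      if "v \<in> carrier_vec n" for v
      using pf(1)[of q] \<open>i<n\<close> that by (simp add: scalar_prod_def atLeast0LessThan)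
    note this[OF Xb]
    ultimately show ?thesis unfolding ppf_def using that by simp
  qed
qed


lemma risk_formula:
  fixes X :: "real mat" and M :: "'a measure" and eps :: "'a \<Rightarrow> real vec"
  assumes X: "X \<in> carrier_mat n p" and nu0: "nu 0 = 0"
    and mono: "\<forall>m<q. nu m < nu (Suc m)" and nuq: "nu q = p"
    and rank: "\<forall>m\<in>{1..q}. full_col_rank (first_cols X (nu m))"
    and beta: "beta \<in> carrier_vec p" and Mq: "Mn \<le> q"
    and P: "prob_space M" and epsc: "\<forall>\<omega>\<in>space M. eps \<omega> \<in> carrier_vec n"
    and meas: "\<forall>i<n. (\<lambda>\<omega>. eps \<omega> $ i) \<in> borel_measurable M
            \<and> integrable M (\<lambda>\<omega>. (eps \<omega> $ i)\<^sup>2)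
            \<and> integral\<^sup>L M (\<lambda>\<omega>. eps \<omega> $ i) = 0"
    and cov: "\<forall>i<n. \<forall>j<n. integral\<^sup>L M (\<lambda>\<omega>. eps \<omega> $ i * eps \<omega> $ j) = Om $$ (i,j)"
  shows "risk_w M eps X beta nu Mn w =
    (\<Sum>k=1..q. ((\<Sum>m=k..Mn. w m) - 1)\<^sup>2 * (\<Sum>i<n. (\<Sum>j<n. ddf X nu n k i j * (X *\<^sub>v beta) $ j)\<^sup>2)
       + (\<Sum>m=k..Mn. w m)\<^sup>2 * (\<Sum>i<n. \<Sum>j<n. \<Sum>l<n. ddf X nu n k i j * ddf X nu n k i l * Om $$ (j,l)))"
proof -
  interpret prob_space M by fact
  note pf = ppf_facts[OF X nu0 mono nuq rank beta]
  define mu where "mu = X *\<^sub>v beta"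
  have muc: "mu \<in> carrier_vec n" unfolding mu_def using X beta by auto
  define pp where "pp = ppf X nu n"
  define d where "d = ddf X nu n"
  define W where "W k = (\<Sum>m=k..Mn. w m)" for k
  define u where "u k i = (\<Sum>j<n. d k i j * mu $ j)" for k i
  define v where "v k i \<omega> = (\<Sum>j<n. d k i j * eps \<omega> $ j)" for k i \<omega>
  define aa where "aa k = (\<Sum>i<n. (u k i)\<^sup>2)" for k
  define bb where "bb k = (\<Sum>i<n. \<Sum>j<n. \<Sum>l<n. d k i j * d k i l * Om $$ (j,l))" for k
  define A where "A = avg_mat X nu Mn w"
  have dr: "dim_row X = n" using X by auto
  have Ac: "A \<in> carrier_mat n n" unfolding A_def avg_mat_def dr by simp
  have Aij: "A $$ (i,j) = (\<Sum>m=1..Mn. w m * pp m i j)" if "i<n" "j<n" for i j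
    unfolding A_def avg_mat_def pp_def ppf_def dr using that by simp
  have pw: "sqnorm (A *\<^sub>v (mu + eps \<omega>) - mu) =
      (\<Sum>k=1..q. (W k - 1)\<^sup>2 * aa k + (W k)\<^sup>2 * (\<Sum>i<n. (v k i \<omega>)\<^sup>2)
          + 2 * (W k - 1) * W k * (\<Sum>i<n. u k i * v k i \<omega>))" if om: "\<omega> \<in> space M" for \<omega>
  proof -
    have ec: "eps \<omega> \<in> carrier_vec n" using epsc om by auto
    have "sqnorm (A *\<^sub>v (mu + eps \<omega>) - mu) =
       (\<Sum>i<n. ((\<Sum>j<n. (\<Sum>m=1..Mn. w m * pp m i j) * (mu $ j + eps \<omega> $ j)) - mu $ i)\<^sup>2)"
      unfolding sqnorm_def using Ac muc ec
      by (intro sum.cong) (auto simp: scalar_prod_def atLeast0LessThan Aij intro!: sum.cong)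
    also have "\<dots> = (\<Sum>k=1..q. \<Sum>i<n. (\<Sum>j<n. (pp k i j - pp (k-1) i j) * (W k * (mu $ j + eps \<omega> $ j) - mu $ j))\<^sup>2)"
      unfolding W_def
      by (rule pointwise[where q=q]) (use pf in \<open>auto simp: pp_def mu_def Mq\<close>)
    also have "\<dots> = (\<Sum>k=1..q. (W k - 1)\<^sup>2 * aa k + (W k)\<^sup>2 * (\<Sum>i<n. (v k i \<omega>)\<^sup>2)
          + 2 * (W k - 1) * W k * (\<Sum>i<n. u k i * v k i \<omega>))"
    proof (rule sum.cong[OF refl])
      fix k
      have e1: "(\<Sum>j<n. (pp k i j - pp (k-1) i j) * (W k * (mu $ j + eps \<omega> $ j) - mu $ j))
          = (W k - 1) * u k i + W k * v k i \<omega>" for i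
        unfolding u_def v_def d_def ddf_def pp_def
        by (simp add: sum_distrib_left sum.distrib[symmetric] algebra_simps)
      have "(\<Sum>i<n. (\<Sum>j<n. (pp k i j - pp (k-1) i j) * (W k * (mu $ j + eps \<omega> $ j) - mu $ j))\<^sup>2)
          = (\<Sum>i<n. (W k - 1)\<^sup>2 * (u k i)\<^sup>2 + (W k)\<^sup>2 * (v k i \<omega>)\<^sup>2 + 2 * (W k - 1) * W k * (u k i * v k i \<omega>))"
        unfolding e1 by (intro sum.cong refl) (simp add: power2_eq_square algebra_simps)
      also have "\<dots> = (W k - 1)\<^sup>2 * aa k + (W k)\<^sup>2 * (\<Sum>i<n. (v k i \<omega>)\<^sup>2)
          + 2 * (W k - 1) * W k * (\<Sum>i<n. u k i * v k i \<omega>)"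
        unfolding aa_def by (simp add: sum.distrib sum_distrib_left)
      finally show "(\<Sum>i<n. (\<Sum>j<n. (pp k i j - pp (k-1) i j) * (W k * (mu $ j + eps \<omega> $ j) - mu $ j))\<^sup>2)
          = (W k - 1)\<^sup>2 * aa k + (W k)\<^sup>2 * (\<Sum>i<n. (v k i \<omega>)\<^sup>2)
          + 2 * (W k - 1) * W k * (\<Sum>i<n. u k i * v k i \<omega>)" .
    qed
    finally show ?thesis .
  qed
  note pl = prob_lin[OF P, of n "\<lambda>\<omega> j. eps \<omega> $ j" "\<lambda>j l. Om $$ (j,l)"]
  have pl1: "integrable M (\<lambda>\<omega>. v k i \<omega>)" "integral\<^sup>L M (\<lambda>\<omega>. v k i \<omega>) = 0"
    "integrable M (\<lambda>\<omega>. (v k i \<omega>)\<^sup>2)"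
    "integral\<^sup>L M (\<lambda>\<omega>. (v k i \<omega>)\<^sup>2) = (\<Sum>j<n. \<Sum>l<n. d k i j * d k i l * Om $$ (j,l))" for k i
    unfolding v_def using pl[of "\<lambda>j. d k i j"] meas cov by auto
  have iS: "integrable M (\<lambda>\<omega>. \<Sum>i<n. (v k i \<omega>)\<^sup>2)" for k using pl1 by auto
  have iC: "integrable M (\<lambda>\<omega>. \<Sum>i<n. u k i * v k i \<omega>)" for k using pl1 by auto
  have ES: "integral\<^sup>L M (\<lambda>\<omega>. \<Sum>i<n. (v k i \<omega>)\<^sup>2) = bb k" for k
    unfolding bb_def using pl1 by (simp add: Bochner_Integration.integral_sum)
  have EC: "integral\<^sup>L M (\<lambda>\<omega>. \<Sum>i<n. u k i * v k i \<omega>) = 0" for k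
    using pl1 by (simp add: Bochner_Integration.integral_sum)
  have "risk_w M eps X beta nu Mn w = integral\<^sup>L M (\<lambda>\<omega>.
      (\<Sum>k=1..q. (W k - 1)\<^sup>2 * aa k + (W k)\<^sup>2 * (\<Sum>i<n. (v k i \<omega>)\<^sup>2)
          + 2 * (W k - 1) * W k * (\<Sum>i<n. u k i * v k i \<omega>)))"
    unfolding risk_w_def risk_mat_def A_def[symmetric] mu_def[symmetric]
    by (rule Bochner_Integration.integral_cong[OF refl]) (rule pw)
  also have "\<dots> = (\<Sum>k=1..q. integral\<^sup>L M (\<lambda>\<omega>. (W k - 1)\<^sup>2 * aa k + (W k)\<^sup>2 * (\<Sum>i<n. (v k i \<omega>)\<^sup>2)
          + 2 * (W k - 1) * W k * (\<Sum>i<n. u k i * v k i \<omega>)))"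
    by (rule Bochner_Integration.integral_sum) (use iS iC in auto)
  also have "\<dots> = (\<Sum>k=1..q. (W k - 1)\<^sup>2 * aa k + (W k)\<^sup>2 * bb k)"
  proof (rule sum.cong[OF refl])
    fix k
    show "integral\<^sup>L M (\<lambda>\<omega>. (W k - 1)\<^sup>2 * aa k + (W k)\<^sup>2 * (\<Sum>i<n. (v k i \<omega>)\<^sup>2)
          + 2 * (W k - 1) * W k * (\<Sum>i<n. u k i * v k i \<omega>)) = (W k - 1)\<^sup>2 * aa k + (W k)\<^sup>2 * bb k"
      using iS[of k] iC[of k] ES[of k] EC[of k] prob_space
      by (simp add: Bochner_Integration.integral_add)
  qed
  finally show ?thesis unfolding W_def aa_def bb_def u_def d_def mu_def .
qed


lemma theta1:
  fixes X :: "real mat" and M :: "'a measure" and eps :: "'a \<Rightarrow> real vec"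
  assumes X: "X \<in> carrier_mat n p" and nu0: "nu 0 = 0"
    and mono: "\<forall>m<q. nu m < nu (Suc m)" and nuq: "nu q = p"
    and rank: "\<forall>m\<in>{1..q}. full_col_rank (first_cols X (nu m))"
    and beta: "beta \<in> carrier_vec p" and q1: "1 \<le> q"
    and Omc: "Om \<in> carrier_mat n n"
    and Osym: "\<And>i j. i<n \<Longrightarrow> j<n \<Longrightarrow> Om $$ (i,j) = Om $$ (j,i)"
  shows "theta X beta Om nu 1 =
    ((\<Sum>i<n. (\<Sum>j<n. ddf X nu n 1 i j * (X *\<^sub>v beta) $ j)\<^sup>2) / real n)
      / (\<Sum>i<n. \<Sum>j<n. \<Sum>l<n. ddf X nu n 1 i j * ddf X nu n 1 i l * Om $$ (j,l))"
proof -
  note pf = ppf_facts[OF X nu0 mono nuq rank beta]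
  note pj = proj_facts[OF X nu0 mono nuq rank]
  define mu where "mu = X *\<^sub>v beta"
  have muc: "mu \<in> carrier_vec n" unfolding mu_def using X beta by auto
  define d where "d i j = ddf X nu n 1 i j" for i j
  define D where "D = proj X nu 1 - proj X nu 0"
  have dr: "dim_row X = n" using X by auto
  have Dc: "D \<in> carrier_mat n n" unfolding D_def using pj(1)[of 1] pj(1)[of 0] q1 by auto
  have Dij: "D $$ (i,j) = d i j" if "i<n" "j<n" for i j
    unfolding D_def d_def ddf_def ppf_def using that pj(1)[of 1] pj(1)[of 0] q1 by auto
  have dsym: "d i j = d j i" if "i<n" "j<n" for i j
    unfolding d_def ddf_def using pf(2)[of 1 i j] pf(2)[of 0 i j] that q1 by auto
  have dorth: "(\<Sum>l<n. d i l * d l m) = d i m" if "i<n" "m<n" for i m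
    unfolding d_def ddf_def using dd_orth[of q n "ppf X nu n" 1 1 i m] pf(3) that q1 by auto
  have num: "scalar_prod mu (D *\<^sub>v mu) = (\<Sum>i<n. (\<Sum>j<n. d i j * mu $ j)\<^sup>2)"
  proof -
    have "scalar_prod mu (D *\<^sub>v mu) = (\<Sum>i<n. mu $ i * (\<Sum>j<n. d i j * mu $ j))"
      using Dc muc by (auto simp: scalar_prod_def atLeast0LessThan Dij intro!: sum.cong)
    also have "\<dots> = (\<Sum>i<n. \<Sum>j<n. mu $ i * mu $ j * d i j)"
      by (simp add: sum_distrib_left mult_ac)
    also have "\<dots> = (\<Sum>i<n. (\<Sum>j<n. d i j * mu $ j) * (\<Sum>l<n. d i l * mu $ l))"
      by (rule cross_zero[symmetric]) (use dsym dorth in auto)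
    finally show ?thesis by (simp add: power2_eq_square)
  qed
  have den: "mtrace (D * Om) = (\<Sum>i<n. \<Sum>j<n. \<Sum>l<n. d i j * d i l * Om $$ (j,l))"
  proof -
    have "mtrace (D * Om) = (\<Sum>i<n. \<Sum>j<n. d i j * Om $$ (j,i))"
      unfolding mtrace_def using Dc Omc
      by (auto simp: scalar_prod_def atLeast0LessThan Dij intro!: sum.cong)
    also have "\<dots> = (\<Sum>j<n. \<Sum>l<n. (\<Sum>i<n. d i j * d i l) * Om $$ (j,l))"
    proof (intro sum.cong refl)
      fix i j assume i: "i \<in> {..<n}" and j: "j \<in> {..<n}"
      have "(\<Sum>i'<n. d i' i * d i' j) = d i j"
        using dorth[of i j] dsym i j by (simp add: dsym)
      thus "d i j * Om $$ (j, i) = (\<Sum>i'<n. d i' i * d i' j) * Om $$ (i, j)"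
        using Osym i j by simp
    qed
    also have "\<dots> = (\<Sum>j<n. \<Sum>l<n. \<Sum>i<n. d i j * d i l * Om $$ (j,l))"
      by (simp add: sum_distrib_right)
    also have "\<dots> = (\<Sum>j<n. \<Sum>i<n. \<Sum>l<n. d i j * d i l * Om $$ (j,l))"
      by (rule sum.cong[OF refl], rule sum.swap)
    also have "\<dots> = (\<Sum>i<n. \<Sum>j<n. \<Sum>l<n. d i j * d i l * Om $$ (j,l))"
      by (rule sum.swap)
    finally show ?thesis .
  qed
  have "theta X beta Om nu 1 = (scalar_prod mu (D *\<^sub>v mu) / real n) / mtrace (D * Om)"
    unfolding theta_def Let_def D_def mu_def dr by simp
  thus ?thesis unfolding num den unfolding d_def mu_def .
qed



lemma T_min_le:
  fixes a b W :: real
  assumes "0 \<le> a" "0 \<le> b"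
  shows "(min W 1 - 1)\<^sup>2 * a + (min W 1)\<^sup>2 * b \<le> (W - 1)\<^sup>2 * a + W\<^sup>2 * b"
proof (cases "W \<le> 1")
  case True thus ?thesis by simp
next
  case False
  hence "1 \<le> W\<^sup>2" by (simp add: one_le_power)
  hence "b \<le> W\<^sup>2 * b" using assms by (simp add: mult_le_cancel_right1)
  moreover have "0 \<le> (W - 1)\<^sup>2 * a" using assms by simp
  ultimately show ?thesis using False by simp
qed

lemma T_lower:
  fixes a b W :: real
  assumes "0 < a" "0 \<le> b"
  shows "b - b\<^sup>2 / a \<le> (W - 1)\<^sup>2 * a + W\<^sup>2 * b"
proof -
  have "(a + b) * ((W - 1)\<^sup>2 * a + W\<^sup>2 * b) - a * b = ((a + b) * W - a)\<^sup>2"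
    by (simp add: power2_eq_square algebra_simps)
  hence h: "a * b \<le> (a + b) * ((W - 1)\<^sup>2 * a + W\<^sup>2 * b)" by (smt (verit) zero_le_power2)
  have "b - b\<^sup>2 / a = (a * b - b * b) / a" using assms by (simp add: field_simps power2_eq_square)
  also have "\<dots> \<le> (a * b) / (a + b)"
  proof -
    have "(a * b - b * b) * (a + b) \<le> (a * b) * a"
      using assms by (simp add: algebra_simps)
    thus ?thesis using assms by (simp add: field_simps)
  qed
  also have "\<dots> \<le> (W - 1)\<^sup>2 * a + W\<^sup>2 * b" using h assms by (simp add: field_simps)
  finally show ?thesis .
qed


lemma split_first:
  fixes f :: "nat \<Rightarrow> real"
  assumes "1 \<le> q"
  shows "(\<Sum>k=1..q. f k) = f 1 + (\<Sum>k=2..q. f k)"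
  using assms by (simp add: sum.atLeast_Suc_atMost numeral_2_eq_2)

lemma main_ineq:
  fixes a b :: "nat \<Rightarrow> real" and R :: "(nat \<Rightarrow> real) \<Rightarrow> real" and ws wt :: "nat \<Rightarrow> real"
  assumes R: "\<And>w. R w = (\<Sum>k=1..q. ((\<Sum>m=k..Mn. w m) - 1)\<^sup>2 * a k + (\<Sum>m=k..Mn. w m)\<^sup>2 * b k)"
    and a: "\<And>k. k \<in> {1..q} \<Longrightarrow> 0 \<le> a k" and b: "\<And>k. k \<in> {1..q} \<Longrightarrow> 0 \<le> b k"
    and M1: "1 \<le> Mn" and Mq: "Mn \<le> q"
    and ws: "ws \<in> simplex_w Mn" "\<forall>v\<in>simplex_w Mn. R ws \<le> R v"
    and wt: "wt \<in> cube_w Mn" "\<forall>v\<in>cube_w Mn. R wt \<le> R v"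
    and a1: "0 < a 1"
  shows "0 \<le> R ws - R wt" "R ws - R wt \<le> (b 1)\<^sup>2 / a 1" "b 1 \<le> R ws"
proof -
  have q1: "1 \<le> q" using M1 Mq by simp
  define T where "T k W = (W - 1)\<^sup>2 * a k + W\<^sup>2 * b k" for k W
  have Tnn: "0 \<le> T k W" if "k \<in> {1..q}" for k W unfolding T_def using a[OF that] b[OF that] by simp
  have R': "R w = T 1 (\<Sum>m=1..Mn. w m) + (\<Sum>k=2..q. T k (\<Sum>m=k..Mn. w m))" for w
    unfolding R T_def using split_first[OF q1] by simp
  have sc: "simplex_w Mn \<subseteq> cube_w Mn" unfolding simplex_w_def cube_w_def by auto
  show "0 \<le> R ws - R wt" using wt(2) sc ws(1) by auto
  have rest_nn: "0 \<le> (\<Sum>k=2..q. T k (\<Sum>m=k..Mn. w m))" for w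
    by (rule sum_nonneg) (use Tnn in auto)
  have s1: "(\<Sum>m=1..Mn. ws m) = 1" using ws(1) unfolding simplex_w_def by auto
  show "b 1 \<le> R ws" using R'[of ws] s1 rest_nn[of ws] unfolding T_def by simp
  define Wt where "Wt k = (\<Sum>m=k..Mn. wt m)" for k
  define c where "c k = min (Wt k) 1" for k
  define w2 where "w2 m = (if m = 1 then 1 - c 2 else c m - c (Suc m))" for m
  have wt01: "0 \<le> wt m \<and> wt m \<le> 1" if "m \<in> {1..Mn}" for m using wt(1) that unfolding cube_w_def by auto
  have Wt0: "Wt k = 0" if "Mn < k" for k unfolding Wt_def using that by simp
  have Wtnn: "0 \<le> Wt k" if "1 \<le> k" for k unfolding Wt_def using wt01 that by (intro sum_nonneg) auto
  have WtS: "Wt m = wt m + Wt (Suc m)" if "m \<le> Mn" for m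
    unfolding Wt_def using that by (simp add: sum.atLeast_Suc_atMost)
  have c0: "c k = 0" if "Mn < k" for k unfolding c_def using Wt0[OF that] by simp
  have tel: "(\<Sum>m=k..Mn. c m - c (Suc m)) = c k - c (Suc Mn)" if "k \<le> Suc Mn" for k
    using that
  proof (induction k rule: inc_induct)
    case base thus ?case by simp
  next
    case (step k)
    hence "(\<Sum>m=k..Mn. c m - c (Suc m)) = (c k - c (Suc k)) + (\<Sum>m=Suc k..Mn. c m - c (Suc m))"
      by (simp add: sum.atLeast_Suc_atMost)
    thus ?case using step by simp
  qed
  have W2: "(\<Sum>m=k..Mn. w2 m) = c k" if "2 \<le> k" for k
  proof (cases "k \<le> Suc Mn")
    case True
    have "(\<Sum>m=k..Mn. w2 m) = (\<Sum>m=k..Mn. c m - c (Suc m))"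
      unfolding w2_def using that by (intro sum.cong) auto
    thus ?thesis using tel[OF True] c0[of "Suc Mn"] by simp
  next
    case False thus ?thesis using c0[of k] by simp
  qed
  have W1: "(\<Sum>m=1..Mn. w2 m) = 1"
  proof -
    have "(\<Sum>m=1..Mn. w2 m) = w2 1 + (\<Sum>m=2..Mn. w2 m)"
      using split_first[OF M1] by simp
    thus ?thesis using W2[of 2] unfolding w2_def by simp
  qed
  have w2s: "w2 \<in> simplex_w Mn"
    unfolding simplex_w_def
  proof (rule CollectI, rule conjI[OF _ W1], rule ballI)
    fix m assume m: "m \<in> {1..Mn}"
    show "0 \<le> w2 m \<and> w2 m \<le> 1"
    proof (cases "m = 1")
      case True
      have "0 \<le> Wt 2" using Wtnn[of 2] by simp
      thus ?thesis unfolding w2_def c_def using True by simp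
    next
      case False
      have "Wt m = wt m + Wt (Suc m)" using WtS m by auto
      moreover have "0 \<le> wt m" "wt m \<le> 1" using wt01[OF m] by auto
      ultimately show ?thesis unfolding w2_def c_def using False by auto
    qed
  qed
  have "R ws \<le> R w2" using ws(2) w2s by auto
  also have "R w2 = T 1 1 + (\<Sum>k=2..q. T k (c k))"
    using R'[of w2] W1 W2 by simp
  also have "\<dots> \<le> T 1 1 + (\<Sum>k=2..q. T k (Wt k))"
    unfolding c_def T_def using T_min_le a b by (intro add_left_mono sum_mono) auto
  also have "T 1 1 = b 1" unfolding T_def by simp
  also have "b 1 \<le> T 1 (Wt 1) + (b 1)\<^sup>2 / a 1"
    using T_lower[OF a1 b[of 1], of "Wt 1"] q1 unfolding T_def by simp
  finally have "R ws \<le> T 1 (Wt 1) + (\<Sum>k=2..q. T k (Wt k)) + (b 1)\<^sup>2 / a 1" by simp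
  also have "T 1 (Wt 1) + (\<Sum>k=2..q. T k (Wt k)) = R wt" using R'[of wt] unfolding Wt_def by simp
  finally show "R ws - R wt \<le> (b 1)\<^sup>2 / a 1" by simp
qed


lemma bb_nonneg:
  fixes M :: "'a measure" and eps :: "'a \<Rightarrow> real vec" and d :: "nat \<Rightarrow> nat \<Rightarrow> real"
  assumes P: "prob_space M"
    and meas: "\<forall>i<n. (\<lambda>\<omega>. eps \<omega> $ i) \<in> borel_measurable M
            \<and> integrable M (\<lambda>\<omega>. (eps \<omega> $ i)\<^sup>2)
            \<and> integral\<^sup>L M (\<lambda>\<omega>. eps \<omega> $ i) = 0"
    and cov: "\<forall>i<n. \<forall>j<n. integral\<^sup>L M (\<lambda>\<omega>. eps \<omega> $ i * eps \<omega> $ j) = Om $$ (i,j)"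
  shows "0 \<le> (\<Sum>i<n. \<Sum>j<n. \<Sum>l<n. d i j * d i l * Om $$ (j,l))"
proof (rule sum_nonneg)
  fix i
  have "(\<Sum>j<n. \<Sum>l<n. d i j * d i l * Om $$ (j,l)) = integral\<^sup>L M (\<lambda>\<omega>. (\<Sum>j<n. d i j * eps \<omega> $ j)\<^sup>2)"
    using prob_lin(4)[OF P, of n "\<lambda>\<omega> j. eps \<omega> $ j" "\<lambda>j l. Om $$ (j,l)" "\<lambda>j. d i j"] meas cov by auto
  also have "0 \<le> \<dots>" by simp
  finally show "0 \<le> (\<Sum>j<n. \<Sum>l<n. d i j * d i l * Om $$ (j,l))" .
qed

lemma per_n:
  fixes X :: "real mat" and M :: "'a measure" and eps :: "'a \<Rightarrow> real vec"
  assumes X: "X \<in> carrier_mat n p" and pn: "p < n" and beta: "beta \<in> carrier_vec p"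
    and nu0: "nu 0 = 0"
    and mono: "\<forall>m<q. nu m < nu (Suc m)" and nuq: "nu q = p"
    and rank: "\<forall>m\<in>{1..q}. full_col_rank (first_cols X (nu m))"
    and M2: "2 \<le> Mn" and Mq: "Mn \<le> q"
    and P: "prob_space M" and epsc: "\<forall>\<omega>\<in>space M. eps \<omega> \<in> carrier_vec n"
    and meas: "\<forall>i<n. (\<lambda>\<omega>. eps \<omega> $ i) \<in> borel_measurable M
            \<and> integrable M (\<lambda>\<omega>. (eps \<omega> $ i)\<^sup>2)
            \<and> integral\<^sup>L M (\<lambda>\<omega>. eps \<omega> $ i) = 0"
    and Omc: "Om \<in> carrier_mat n n"
    and cov: "\<forall>i<n. \<forall>j<n. integral\<^sup>L M (\<lambda>\<omega>. eps \<omega> $ i * eps \<omega> $ j) = Om $$ (i,j)"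
    and ws: "unique_argmin Mn (risk_w M eps X beta nu Mn) (simplex_w Mn) ws"
    and wt: "unique_argmin Mn (risk_w M eps X beta nu Mn) (cube_w Mn) wt"
    and th: "thbar \<le> theta X beta Om nu 1" and thp: "0 < thbar"
  shows "\<bar>risk_w M eps X beta nu Mn ws - risk_w M eps X beta nu Mn wt\<bar>
       \<le> 1 / (real n * thbar) * \<bar>risk_w M eps X beta nu Mn ws\<bar>"
proof -
  define R where "R = risk_w M eps X beta nu Mn"
  define a where "a k = (\<Sum>i<n. (\<Sum>j<n. ddf X nu n k i j * (X *\<^sub>v beta) $ j)\<^sup>2)" for k
  define b where "b k = (\<Sum>i<n. \<Sum>j<n. \<Sum>l<n. ddf X nu n k i j * ddf X nu n k i l * Om $$ (j,l))" for k
  have Rf: "R w = (\<Sum>k=1..q. ((\<Sum>m=k..Mn. w m) - 1)\<^sup>2 * a k + (\<Sum>m=k..Mn. w m)\<^sup>2 * b k)" for w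
    unfolding R_def a_def b_def by (rule risk_formula[OF X nu0 mono nuq rank beta Mq P epsc meas cov])
  have an: "0 \<le> a k" for k unfolding a_def by (intro sum_nonneg) auto
  have bn: "0 \<le> b k" for k unfolding b_def by (rule bb_nonneg[OF P meas cov])
  have q1: "1 \<le> q" using M2 Mq by simp
  have Osym: "Om $$ (i,j) = Om $$ (j,i)" if "i<n" "j<n" for i j
  proof -
    have "Om $$ (i,j) = integral\<^sup>L M (\<lambda>\<omega>. eps \<omega> $ i * eps \<omega> $ j)" using cov that by simp
    also have "\<dots> = integral\<^sup>L M (\<lambda>\<omega>. eps \<omega> $ j * eps \<omega> $ i)" by (simp add: mult.commute)
    also have "\<dots> = Om $$ (j,i)" using cov that by simp
    finally show ?thesis .
  qed
  have th1: "theta X beta Om nu 1 = (a 1 / real n) / b 1"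
    unfolding a_def b_def by (rule theta1[OF X nu0 mono nuq rank beta q1 Omc Osym])
  have npos: "0 < real n" using pn by simp
  have b1: "0 < b 1"
  proof -
    have "b 1 \<noteq> 0" using th th1 thp by auto
    thus ?thesis using bn[of 1] by simp
  qed
  have a1ge: "real n * thbar * b 1 \<le> a 1"
  proof -
    have "thbar \<le> a 1 / (real n * b 1)" using th th1 by simp
    hence "thbar * (real n * b 1) \<le> a 1"
      using pos_le_divide_eq[of "real n * b 1" thbar "a 1"] npos b1 by simp
    thus ?thesis by (simp add: mult_ac)
  qed
  have a1: "0 < a 1" using a1ge npos thp b1 by (smt (verit) mult_pos_pos)
  have wsu: "ws \<in> simplex_w Mn" "\<forall>v\<in>simplex_w Mn. R ws \<le> R v"
    using ws unfolding unique_argmin_def R_def by auto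
  have wtu: "wt \<in> cube_w Mn" "\<forall>v\<in>cube_w Mn. R wt \<le> R v"
    using wt unfolding unique_argmin_def R_def by auto
  note mi = main_ineq[where R=R and q=q and Mn=Mn and a=a and b=b, OF Rf an bn _ Mq wsu wtu a1]
  have M1: "1 \<le> Mn" using M2 by simp
  note mi = mi[OF M1]
  have "\<bar>R ws - R wt\<bar> = R ws - R wt" using mi(1) by simp
  also have "\<dots> \<le> (b 1)\<^sup>2 / a 1" using mi(2) .
  also have "\<dots> = (b 1 / a 1) * b 1" by (simp add: power2_eq_square)
  also have "\<dots> \<le> (b 1 / a 1) * \<bar>R ws\<bar>" using mi(3) b1 a1
    by (intro mult_left_mono) auto
  also have "b 1 / a 1 \<le> 1 / (real n * thbar)"
    using a1ge b1 a1 npos thp by (simp add: field_simps)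
  hence "(b 1 / a 1) * \<bar>R ws\<bar> \<le> 1 / (real n * thbar) * \<bar>R ws\<bar>"
    by (intro mult_right_mono) auto
  finally show ?thesis unfolding R_def .
qed
theorem theorem5:
  fixes M :: "nat \<Rightarrow> 'a measure"
    and eps :: "nat \<Rightarrow> 'a \<Rightarrow> real vec"
    and X :: "nat \<Rightarrow> real mat" and beta :: "nat \<Rightarrow> real vec" and Om :: "nat \<Rightarrow> real mat"
    and p q Mn :: "nat \<Rightarrow> nat" and nu :: "nat \<Rightarrow> nat \<Rightarrow> nat"
    and wstar wtil :: "nat \<Rightarrow> nat \<Rightarrow> real"
  assumes setting: "\<forall>\<^sub>F n in sequentially.
      X n \<in> carrier_mat n (p n) \<and> p n < n \<and> beta n \<in> carrier_vec (p n)
    \<and> nu n 0 = 0 \<and> (\<forall>m<q n. nu n m < nu n (Suc m)) \<and> nu n (q n) = p n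
    \<and> (\<forall>m\<in>{1..q n}. full_col_rank (first_cols (X n) (nu n m)))
    \<and> 2 \<le> Mn n \<and> Mn n \<le> q n
    \<and> prob_space (M n)
    \<and> (\<forall>\<omega>\<in>space (M n). eps n \<omega> \<in> carrier_vec n)
    \<and> (\<forall>i<n. (\<lambda>\<omega>. eps n \<omega> $ i) \<in> borel_measurable (M n)
            \<and> integrable (M n) (\<lambda>\<omega>. (eps n \<omega> $ i)\<^sup>2)
            \<and> integral\<^sup>L (M n) (\<lambda>\<omega>. eps n \<omega> $ i) = 0)
    \<and> Om n \<in> carrier_mat n n
    \<and> (\<forall>i<n. \<forall>j<n. integral\<^sup>L (M n) (\<lambda>\<omega>. eps n \<omega> $ i * eps n \<omega> $ j) = Om n $$ (i,j))
    \<and> (\<forall>x\<in>carrier_vec n. x \<noteq> 0\<^sub>v n \<longrightarrow> scalar_prod x (Om n *\<^sub>v x) > 0)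
    \<and> unique_argmin (Mn n) (risk_w (M n) (eps n) (X n) (beta n) (nu n) (Mn n))
        (simplex_w (Mn n)) (wstar n)
    \<and> unique_argmin (Mn n) (risk_w (M n) (eps n) (X n) (beta n) (nu n) (Mn n))
        (cube_w (Mn n)) (wtil n)
    \<and> (\<exists>!m. m \<in> {1..q n} \<and>
          (\<forall>k\<in>{1..q n}. risk_m (M n) (eps n) (X n) (beta n) (nu n) m
                        \<le> risk_m (M n) (eps n) (X n) (beta n) (nu n) k))"
  and A1: "(\<lambda>n. sqnorm (X n *\<^sub>v beta n) / real n) \<in> O(\<lambda>n. 1)"
  and A2: "\<exists>c1 c2::real. 0 < c1 \<and> c1 \<le> c2 \<and>
      (\<forall>\<^sub>F n in sequentially. \<forall>k. eigenvalue (Om n) k \<longrightarrow> c1 < k \<and> k < c2)"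
  and A3: "\<forall>\<^sub>F n in sequentially. \<forall>m. 1 \<le> m \<and> m < q n \<longrightarrow>
      theta (X n) (beta n) (Om n) (nu n) (Suc m) \<le> theta (X n) (beta n) (Om n) (nu n) m"
  and A4: "\<exists>V::nat. 1 \<le> V \<and> (\<forall>\<^sub>F n in sequentially.
      \<forall>m\<in>{1..dn (X n) (beta n) (Om n) (nu n) (q n)}. nu n m - nu n (m - 1) \<le> V)"
  and A5: "\<forall>m::nat. 1 \<le> m \<longrightarrow> (\<exists>thbar>0. \<exists>K. \<forall>n\<ge>K.
      m \<le> dn (X n) (beta n) (Om n) (nu n) (q n) \<and> theta (X n) (beta n) (Om n) (nu n) m \<ge> thbar)"
  and A6: "\<forall>\<^sub>F n in sequentially. \<exists>m'. 1 \<le> m' \<and> m' \<le> dn (X n) (beta n) (Om n) (nu n) (q n) - 1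
      \<and> (\<forall>m. 2 \<le> m \<and> m \<le> m' \<longrightarrow>
            risk_m (M n) (eps n) (X n) (beta n) (nu n) m
              < risk_m (M n) (eps n) (X n) (beta n) (nu n) (m - 1))
      \<and> (\<forall>m. m' < m \<and> m \<le> dn (X n) (beta n) (Om n) (nu n) (q n) \<longrightarrow>
            risk_m (M n) (eps n) (X n) (beta n) (nu n) m
              \<ge> risk_m (M n) (eps n) (X n) (beta n) (nu n) (m - 1))
      \<and> risk_m (M n) (eps n) (X n) (beta n) (nu n) (dn (X n) (beta n) (Om n) (nu n) (q n))
          > risk_m (M n) (eps n) (X n) (beta n) (nu n) (dn (X n) (beta n) (Om n) (nu n) (q n) - 1)"
  shows "(\<lambda>n. risk_w (M n) (eps n) (X n) (beta n) (nu n) (Mn n) (wstar n)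
              - risk_w (M n) (eps n) (X n) (beta n) (nu n) (Mn n) (wtil n))
         \<in> o(\<lambda>n. risk_w (M n) (eps n) (X n) (beta n) (nu n) (Mn n) (wstar n))"
  proof -
  obtain thbar K where thp: "0 < thbar" and thK: "\<And>n. n \<ge> K \<Longrightarrow>
      1 \<le> dn (X n) (beta n) (Om n) (nu n) (q n) \<and> theta (X n) (beta n) (Om n) (nu n) 1 \<ge> thbar"
    using A5 by (metis order_refl)
  have key: "\<forall>\<^sub>F n in sequentially.
      \<bar>risk_w (M n) (eps n) (X n) (beta n) (nu n) (Mn n) (wstar n)
              - risk_w (M n) (eps n) (X n) (beta n) (nu n) (Mn n) (wtil n)\<bar>
      \<le> 1 / (real n * thbar) * \<bar>risk_w (M n) (eps n) (X n) (beta n) (nu n) (Mn n) (wstar n)\<bar>"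
    using setting eventually_ge_at_top[of K]
  proof eventually_elim
    case (elim n)
    show ?case
      by (rule per_n[where p="p n" and q="q n"]) (use elim thK[of n] thp in auto)
  qed
  show ?thesis
  proof (rule landau_o.smallI)
    fix c :: real assume c: "0 < c"
    define N where "N = nat \<lceil>1 / (c * thbar)\<rceil> + 1"
    have ev: "\<forall>\<^sub>F n in sequentially. 1 / (real n * thbar) \<le> c"
      using eventually_ge_at_top[of N]
    proof eventually_elim
      case (elim n)
      have "1 / (c * thbar) \<le> real n" using elim unfolding N_def by linarith
      moreover have "0 < real n" using elim unfolding N_def by simp
      ultimately show ?case using c thp by (simp add: field_simps)
    qed
    show "\<forall>\<^sub>F n in sequentially. norm (risk_w (M n) (eps n) (X n) (beta n) (nu n) (Mn n) (wstar n)
              - risk_w (M n) (eps n) (X n) (beta n) (nu n) (Mn n) (wtil n))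
         \<le> c * norm (risk_w (M n) (eps n) (X n) (beta n) (nu n) (Mn n) (wstar n))"
      using key ev
    proof eventually_elim
      case (elim n)
      have "\<bar>risk_w (M n) (eps n) (X n) (beta n) (nu n) (Mn n) (wstar n)
              - risk_w (M n) (eps n) (X n) (beta n) (nu n) (Mn n) (wtil n)\<bar>
          \<le> 1 / (real n * thbar) * \<bar>risk_w (M n) (eps n) (X n) (beta n) (nu n) (Mn n) (wstar n)\<bar>"
        using elim(1) .
      also have "\<dots> \<le> c * \<bar>risk_w (M n) (eps n) (X n) (beta n) (nu n) (Mn n) (wstar n)\<bar>"
        using elim(2) by (intro mult_right_mono) auto
      finally show ?case by simp
    qed
  qed
qed


end
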